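(* For any cubic graphs $G$ and $A$, a graph $G\circ A^-$ is Class $1$ if and only if $G$ and $A$ are Class $1$.
   Context: A cubic graph is Class $1$ if its chromatic index is $3$ and Class $2$ if its chromatic index is $4$. Let $G$ and $A$ be $3$-regular graphs, let $a$ be a vertex of $A$ and $A^-=A-a$. A graph $G\circ A^-$ is any graph obtained by replacing each vertex $v$ of $G$ by a copy $A^-_v$ of $A^-$ and, for each edge $uv$ of $G$, adding an edge joining a vertex of degree $2$ of $A^-_u$ to a vertex of degree $2$ of $A^-_v$, so that each degree-$2$ vertex of each copy is incident with exactly one added edge (the choices of $a$ and of these edges are arbitrary). *)

theory Defs
  imports Main
begin

definition simple_graph :: "'v set \<Rightarrow> 'v set set \<Rightarrow> bool" where
  "simple_graph V E \<longleftrightarrow> finite V \<and> (\<forall>e\<in>E. \<exists>u v. e = {u, v} \<and> u \<in> V \<and> v \<in> V \<and> u \<noteq> v)"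

definition degree :: "'v set set \<Rightarrow> 'v \<Rightarrow> nat" where
  "degree E v = card {e \<in> E. v \<in> e}"

definition cubic :: "'v set \<Rightarrow> 'v set set \<Rightarrow> bool" where
  "cubic V E \<longleftrightarrow> simple_graph V E \<and> (\<forall>v\<in>V. degree E v = 3)"

definition nbrs :: "'v set set \<Rightarrow> 'v \<Rightarrow> 'v set" where
  "nbrs E v = {u. {v, u} \<in> E}"

definition proper_edge_colouring :: "'v set set \<Rightarrow> nat \<Rightarrow> ('v set \<Rightarrow> nat) \<Rightarrow> bool" where
  "proper_edge_colouring E k c \<longleftrightarrow>
     (\<forall>e\<in>E. c e < k) \<and> (\<forall>e\<in>E. \<forall>f\<in>E. e \<noteq> f \<and> e \<inter> f \<noteq> {} \<longrightarrow> c e \<noteq> c f)"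

definition chromatic_index :: "'v set set \<Rightarrow> nat" where
  "chromatic_index E = (LEAST k. \<exists>c. proper_edge_colouring E k c)"

definition class1 :: "'v set set \<Rightarrow> bool" where
  "class1 E \<longleftrightarrow> chromatic_index E = 3"

text \<open>Vertex (v, x) is the copy of vertex x of A - a in A^-_v.
  For every vertex u of G and every neighbour v of u, \<phi> u v is the degree-2 vertex of
  A^-_u (i.e. a neighbour of a in A) used by the added edge for uv; \<phi> u must be a bijection
  from the neighbours of u in G onto the neighbours of a in A, so that every degree-2 vertex
  of every copy is incident with exactly one added edge.\<close>

definition valid_attachment ::
  "'a set \<Rightarrow> 'a set set \<Rightarrow> 'b set set \<Rightarrow> 'b \<Rightarrow> ('a \<Rightarrow> 'a \<Rightarrow> 'b) \<Rightarrow> bool" where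
  "valid_attachment VG EG EA a \<phi> \<longleftrightarrow> (\<forall>u\<in>VG. bij_betw (\<phi> u) (nbrs EG u) (nbrs EA a))"

definition comp_edges ::
  "'a set \<Rightarrow> 'a set set \<Rightarrow> 'b set set \<Rightarrow> 'b \<Rightarrow> ('a \<Rightarrow> 'a \<Rightarrow> 'b) \<Rightarrow> ('a \<times> 'b) set set" where
  "comp_edges VG EG EA a \<phi> =
     {{(v, x), (v, y)} | v x y. v \<in> VG \<and> {x, y} \<in> EA \<and> x \<noteq> a \<and> y \<noteq> a}
     \<union> {{(u, \<phi> u v), (v, \<phi> v u)} | u v. {u, v} \<in> EG}"

end

theory Submission imports Defs begin

lemma sg_edge: "simple_graph V E \<Longrightarrow> e \<in> E \<Longrightarrow> \<exists>u v. e = {u,v} \<and> u\<in>V \<and> v\<in>V \<and> u\<noteq>v"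
  by (auto simp: simple_graph_def)

lemma sg_edge2: "simple_graph V E \<Longrightarrow> {x,y} \<in> E \<Longrightarrow> x \<noteq> y \<and> x \<in> V \<and> y \<in> V"
  unfolding simple_graph_def by (metis doubleton_eq_iff)

lemma sg_sub: "simple_graph V E \<Longrightarrow> e \<in> E \<Longrightarrow> e \<subseteq> V \<and> card e = 2"
  by (auto simp: simple_graph_def)

lemma sg_finite: "simple_graph V E \<Longrightarrow> finite E"
proof -
  assume s: "simple_graph V E"
  have "E \<subseteq> Pow V" using sg_sub[OF s] by auto
  moreover have "finite V" using s by (simp add: simple_graph_def)
  ultimately show ?thesis by (meson finite_Pow_iff finite_subset)
qed

lemma card_nbrs: assumes "simple_graph V E" shows "card (nbrs E v) = degree E v"
proof -
  have "bij_betw (\<lambda>u. {v,u}) (nbrs E v) {e\<in>E. v\<in>e}"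
  proof (rule bij_betw_imageI)
    show "inj_on (\<lambda>u. {v, u}) (nbrs E v)" by (auto simp: inj_on_def doubleton_eq_iff)
    show "(\<lambda>u. {v, u}) ` nbrs E v = {e \<in> E. v \<in> e}"
    proof
      show "(\<lambda>u. {v, u}) ` nbrs E v \<subseteq> {e \<in> E. v \<in> e}" by (auto simp: nbrs_def)
      show "{e \<in> E. v \<in> e} \<subseteq> (\<lambda>u. {v, u}) ` nbrs E v"
      proof
        fix e assume "e \<in> {e \<in> E. v \<in> e}"
        then obtain x y where "e = {x,y}" "e \<in> E" "v \<in> e" using sg_edge[OF assms] by blast
        then have "(v = x \<and> e = {v,y}) \<or> (v = y \<and> e = {v,x})" by (auto simp: insert_commute)
        then obtain w where w: "e = {v,w}" by blast
        then have "w \<in> nbrs E v" using \<open>e \<in> E\<close> by (simp add: nbrs_def)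
        then show "e \<in> (\<lambda>u. {v, u}) ` nbrs E v" using w by blast
      qed
    qed
  qed
  then show ?thesis unfolding degree_def by (simp add: bij_betw_same_card)
qed

lemma nbrs_sym: "u \<in> nbrs E v \<longleftrightarrow> v \<in> nbrs E u"
  by (simp add: nbrs_def insert_commute)

lemma exists_colouring: "finite E \<Longrightarrow> \<exists>k c. proper_edge_colouring E k c"
proof -
  assume "finite E"
  then obtain h where h: "bij_betw h E {0..<card E}" using ex_bij_betw_finite_nat by blast
  then have "proper_edge_colouring E (card E) h"
    unfolding proper_edge_colouring_def bij_betw_def inj_on_def by auto
  then show ?thesis by blast
qed

lemma class1_col: "finite E \<Longrightarrow> class1 E \<Longrightarrow> \<exists>c. proper_edge_colouring E 3 c"
proof -
  assume f: "finite E" and c: "class1 E"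
  have "\<exists>k c. proper_edge_colouring E k c" using exists_colouring[OF f] .
  then have "\<exists>c. proper_edge_colouring E (LEAST k. \<exists>c. proper_edge_colouring E k c) c"
    by (rule LeastI_ex)
  then show ?thesis using c unfolding class1_def chromatic_index_def by simp
qed

lemma colour_card: assumes "proper_edge_colouring E k c" "F \<subseteq> E" "finite F" "\<forall>e\<in>F. s\<in>e"
  shows "card F \<le> k" "inj_on c F" "c ` F \<subseteq> {..<k}"
proof -
  show i: "inj_on c F" using assms unfolding proper_edge_colouring_def inj_on_def by blast
  show s: "c ` F \<subseteq> {..<k}" using assms unfolding proper_edge_colouring_def by auto
  show "card F \<le> k" using card_inj_on_le[OF i s] by simp
qed

lemma col_surj: assumes "proper_edge_colouring E 3 c" "F \<subseteq> E" "finite F" "\<forall>e\<in>F. s\<in>e"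
  "3 \<le> card F" "i < (3::nat)" shows "\<exists>e\<in>F. c e = i"
proof -
  have i: "inj_on c F" and s: "c ` F \<subseteq> {..<3}" using colour_card[OF assms(1-4)] by auto
  have "card (c ` F) = card {..<3::nat}" using colour_card(1)[OF assms(1-4)] assms(5) card_image[OF i] by simp
  then have "c ` F = {..<3}" using card_subset_eq[OF _ s] by simp
  then show ?thesis using assms(6) by (metis imageE lessThan_iff)
qed

lemma class1_intro: assumes "proper_edge_colouring E 3 c" "F \<subseteq> E" "finite F" "\<forall>e\<in>F. s\<in>e"
  "3 \<le> card F" shows "class1 E"
  unfolding class1_def chromatic_index_def
proof (rule Least_equality)
  show "\<exists>c. proper_edge_colouring E 3 c" using assms(1) by blast
  fix k assume "\<exists>c. proper_edge_colouring E k c"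
  then obtain c' where "proper_edge_colouring E k c'" by blast
  from colour_card(1)[OF this assms(2-4)] assms(5) show "3 \<le> k" by simp
qed

lemma handshake: assumes "simple_graph V E" shows "(\<Sum>v\<in>V. degree E v) = 2 * card E"
proof -
  have fV: "finite V" using assms by (simp add: simple_graph_def)
  have fE: "finite E" using sg_finite[OF assms] .
  have "(\<Sum>v\<in>V. degree E v) = (\<Sum>v\<in>V. \<Sum>e\<in>E. if v \<in> e then 1 else 0)"
    unfolding degree_def using fE by (simp add: sum.inter_filter[symmetric])
  also have "\<dots> = (\<Sum>e\<in>E. \<Sum>v\<in>V. if v \<in> e then 1 else 0)" by (rule sum.swap)
  also have "\<dots> = (\<Sum>e\<in>E. 2)"
  proof (rule sum.cong[OF refl])
    fix e assume "e \<in> E"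
    then have "e \<subseteq> V" "card e = 2" using sg_sub[OF assms] by auto
    then have "{v\<in>V. v\<in>e} = e" by auto
    then show "(\<Sum>v\<in>V. if v \<in> e then 1 else 0) = (2::nat)"
      using fV \<open>card e = 2\<close> by (simp add: sum.inter_filter[symmetric])
  qed
  finally show ?thesis by simp
qed

lemma cubic_even: assumes "cubic V E" shows "even (card V)"
proof -
  have "(\<Sum>v\<in>V. degree E v) = 3 * card V" using assms by (simp add: cubic_def)
  then have "3 * card V = 2 * card E" using handshake[of V E] assms by (simp add: cubic_def)
  then show ?thesis by presburger
qed


definition aedge :: "('a \<Rightarrow> 'a \<Rightarrow> 'b) \<Rightarrow> 'a \<Rightarrow> 'a \<Rightarrow> ('a \<times> 'b) set" where
  "aedge \<phi> u v = {(u, \<phi> u v), (v, \<phi> v u)}"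

lemma sg_edge_at: assumes "simple_graph V E" "e \<in> E" "x \<in> e"
  shows "\<exists>y. e = {x,y} \<and> y \<noteq> x \<and> y \<in> V"
proof -
  obtain p q where "e = {p,q}" "p \<in> V" "q \<in> V" "p \<noteq> q" using sg_edge[OF assms(1,2)] by blast
  then show ?thesis using assms(3) by (auto simp: insert_commute)
qed

lemma aedge_sym: "aedge \<phi> u v = aedge \<phi> v u" by (auto simp: aedge_def)

locale ctx =
  fixes VG :: "'a set" and EG :: "'a set set" and VA :: "'b set" and EA :: "'b set set"
    and a :: 'b and \<phi> :: "'a \<Rightarrow> 'a \<Rightarrow> 'b"
  assumes G: "cubic VG EG" and A: "cubic VA EA" and aV: "a \<in> VA"
    and att: "valid_attachment VG EG EA a \<phi>"
begin

abbreviation "C \<equiv> comp_edges VG EG EA a \<phi>"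

lemma sgG: "simple_graph VG EG" using G by (simp add: cubic_def)
lemma sgA: "simple_graph VA EA" using A by (simp add: cubic_def)

lemma nbrsA_card: "card (nbrs EA a) = 3"
  using card_nbrs[OF sgA] A aV by (simp add: cubic_def)

lemma nbrsA_sub: "x \<in> nbrs EA a \<Longrightarrow> x \<in> VA \<and> x \<noteq> a \<and> {a,x} \<in> EA"
  using sg_edge2[OF sgA, of a x] by (auto simp: nbrs_def)

lemma nbrsG: "v \<in> nbrs EG u \<Longrightarrow> u \<in> VG \<and> v \<in> VG \<and> u \<noteq> v \<and> {u,v} \<in> EG"
  using sg_edge2[OF sgG, of u v] by (simp add: nbrs_def)

lemma nbrsG_card: "u \<in> VG \<Longrightarrow> card (nbrs EG u) = 3"
  using card_nbrs[OF sgG] G by (simp add: cubic_def)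

lemma finite_nbrsG: "u \<in> VG \<Longrightarrow> finite (nbrs EG u)"
  using nbrsG_card by (metis card.infinite zero_neq_numeral)

lemma finite_nbrsA: "finite (nbrs EA a)"
  using nbrsA_card by (metis card.infinite zero_neq_numeral)

lemma bij\<phi>: "u \<in> VG \<Longrightarrow> bij_betw (\<phi> u) (nbrs EG u) (nbrs EA a)"
  using att by (simp add: valid_attachment_def)

lemma \<phi>_in: "v \<in> nbrs EG u \<Longrightarrow> \<phi> u v \<in> nbrs EA a"
  using bij\<phi> nbrsG by (meson bij_betwE)

lemma \<phi>_in': "{u,v} \<in> EG \<Longrightarrow> \<phi> u v \<in> nbrs EA a"
  using \<phi>_in by (simp add: nbrs_def)

lemma \<phi>_inj: "v \<in> nbrs EG u \<Longrightarrow> w \<in> nbrs EG u \<Longrightarrow> \<phi> u v = \<phi> u w \<Longrightarrow> v = w"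
  using bij\<phi> nbrsG by (meson bij_betw_def inj_onD)

definition \<psi> where "\<psi> u = inv_into (nbrs EG u) (\<phi> u)"

lemma \<psi>: "u \<in> VG \<Longrightarrow> x \<in> nbrs EA a \<Longrightarrow> \<psi> u x \<in> nbrs EG u \<and> \<phi> u (\<psi> u x) = x"
  unfolding \<psi>_def using bij\<phi>
  by (metis bij_betw_def f_inv_into_f inv_into_into)

lemma \<psi>\<phi>: "v \<in> nbrs EG u \<Longrightarrow> \<psi> u (\<phi> u v) = v"
  unfolding \<psi>_def using bij\<phi> nbrsG by (meson bij_betw_def inv_into_f_f)

lemma C_cases:
  assumes "ed \<in> C"
    "\<And>w x y. w \<in> VG \<Longrightarrow> {x,y} \<in> EA \<Longrightarrow> x \<noteq> a \<Longrightarrow> y \<noteq> a \<Longrightarrow> ed = {(w,x),(w,y)} \<Longrightarrow> P"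
    "\<And>u v. {u,v} \<in> EG \<Longrightarrow> ed = aedge \<phi> u v \<Longrightarrow> P"
  shows P
  using assms unfolding comp_edges_def aedge_def by blast

lemma inner_in: "w \<in> VG \<Longrightarrow> {x,y} \<in> EA \<Longrightarrow> x \<noteq> a \<Longrightarrow> y \<noteq> a \<Longrightarrow> {(w,x),(w,y)} \<in> C"
  unfolding comp_edges_def by blast

lemma aedge_in: "{u,v} \<in> EG \<Longrightarrow> aedge \<phi> u v \<in> C"
  unfolding comp_edges_def aedge_def by blast

lemma C_props: "ed \<in> C \<Longrightarrow> ed \<subseteq> VG \<times> VA \<and> card ed = 2"
proof (erule C_cases)
  fix w x y assume "w \<in> VG" "{x,y} \<in> EA" "ed = {(w, x), (w, y)}"
  then show "ed \<subseteq> VG \<times> VA \<and> card ed = 2" using sg_edge2[OF sgA, of x y] by auto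
next
  fix u v assume e: "{u,v} \<in> EG" "ed = aedge \<phi> u v"
  have "\<phi> u v \<in> VA" "\<phi> v u \<in> VA" using \<phi>_in' nbrsA_sub e(1) by (auto simp: insert_commute)
  then show "ed \<subseteq> VG \<times> VA \<and> card ed = 2" using sg_edge2[OF sgG e(1)] e(2)
    by (auto simp: aedge_def)
qed

lemma finite_C: "finite C"
proof -
  have "C \<subseteq> Pow (VG \<times> VA)" using C_props by auto
  moreover have "finite VG" "finite VA" using sgG sgA by (auto simp: simple_graph_def)
  ultimately show ?thesis by (meson finite_Pow_iff finite_SigmaI finite_subset)
qed

lemma deg3: assumes "u \<in> VG" "x \<in> VA" "x \<noteq> a" shows "3 \<le> card {ed\<in>C. (u,x)\<in>ed}"
proof -
  define f where "f e = (if a \<in> e then aedge \<phi> u (\<psi> u x) else (\<lambda>y. (u,y)) ` e)" for e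
  have f1: "f e \<in> {ed\<in>C. (u,x)\<in>ed} \<and> (a \<in> e \<longrightarrow> f e = aedge \<phi> u (\<psi> u x) \<and> \<psi> u x \<noteq> u)
     \<and> (a \<notin> e \<longrightarrow> f e = (\<lambda>y. (u,y)) ` e)" if ein: "e \<in> {e\<in>EA. x\<in>e}" for e
  proof -
    obtain y where e: "e = {x,y}" "e \<in> EA" using ein sg_edge_at[OF sgA, of e x] by auto
    show ?thesis
    proof (cases "a \<in> e")
      case True
      then have "y = a" using e assms by auto
      then have "x \<in> nbrs EA a" using e by (simp add: nbrs_def insert_commute)
      then have "\<psi> u x \<in> nbrs EG u \<and> \<phi> u (\<psi> u x) = x" using \<psi> assms by blast
      then show ?thesis using True aedge_in[of u "\<psi> u x"] nbrsG[of "\<psi> u x" u]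
        by (auto simp: f_def aedge_def)
    next
      case False
      then show ?thesis using inner_in[OF assms(1) e(2)[unfolded e(1)]] assms e
        by (auto simp: f_def)
    qed
  qed
  have "inj_on f {e\<in>EA. x\<in>e}"
  proof (rule inj_onI)
    fix e1 e2 assume h: "e1 \<in> {e\<in>EA. x\<in>e}" "e2 \<in> {e\<in>EA. x\<in>e}" "f e1 = f e2"
    obtain y1 where e1: "e1 = {x,y1}" using h sg_edge_at[OF sgA, of e1 x] by auto
    obtain y2 where e2: "e2 = {x,y2}" using h sg_edge_at[OF sgA, of e2 x] by auto
    show "e1 = e2"
    proof (cases "a \<in> e1"; cases "a \<in> e2")
      assume "a \<in> e1" "a \<in> e2" then show ?thesis using e1 e2 assms by auto
    next
      assume "a \<notin> e1" "a \<notin> e2"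
      then have "(\<lambda>y. (u,y)) ` e1 = (\<lambda>y. (u,y)) ` e2" using f1 h by metis
      then show ?thesis by (metis inj_image_eq_iff inj_onI prod.inject)
    next
      assume "a \<in> e1" "a \<notin> e2"
      then have "aedge \<phi> u (\<psi> u x) = (\<lambda>y. (u,y)) ` e2" "\<psi> u x \<noteq> u" using f1 h by metis+
      then show ?thesis by (auto simp: aedge_def)
    next
      assume "a \<notin> e1" "a \<in> e2"
      then have "aedge \<phi> u (\<psi> u x) = (\<lambda>y. (u,y)) ` e1" "\<psi> u x \<noteq> u" using f1 h by metis+
      then show ?thesis by (auto simp: aedge_def)
    qed
  qed
  moreover have "f ` {e\<in>EA. x\<in>e} \<subseteq> {ed\<in>C. (u,x)\<in>ed}" using f1 by blast
  moreover have "finite {ed\<in>C. (u,x)\<in>ed}" using finite_C by simp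
  ultimately have "card {e\<in>EA. x\<in>e} \<le> card {ed\<in>C. (u,x)\<in>ed}" by (rule card_inj_on_le)
  moreover have "card {e\<in>EA. x\<in>e} = 3" using A assms by (simp add: cubic_def degree_def)
  ultimately show ?thesis by simp
qed

end

lemma sg_shared: assumes "simple_graph V E" "e \<in> E" "f \<in> E" "e \<noteq> f" "e \<inter> f \<noteq> {}"
  shows "\<exists>x y z. e = {x,y} \<and> f = {x,z} \<and> y \<noteq> z \<and> x \<noteq> y \<and> x \<noteq> z \<and> x \<in> V \<and> y \<in> V \<and> z \<in> V"
proof -
  obtain x where x: "x \<in> e" "x \<in> f" using assms(5) by blast
  obtain y where y: "e = {x,y}" "y \<noteq> x" "y \<in> V" using sg_edge_at[OF assms(1,2) x(1)] by blast
  obtain z where z: "f = {x,z}" "z \<noteq> x" "z \<in> V" using sg_edge_at[OF assms(1,3) x(2)] by blast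
  have "x \<in> V" using sg_sub[OF assms(1,2)] x by auto
  then show ?thesis using y z assms(4) by blast
qed

lemma proper_diff: "proper_edge_colouring E k c \<Longrightarrow> e \<in> E \<Longrightarrow> f \<in> E \<Longrightarrow> e \<noteq> f \<Longrightarrow> x \<in> e \<Longrightarrow> x \<in> f
  \<Longrightarrow> c e \<noteq> c f"
  unfolding proper_edge_colouring_def by blast

definition gedge :: "('a \<Rightarrow> 'a \<Rightarrow> 'b) \<Rightarrow> 'a set \<Rightarrow> ('a \<times> 'b) set" where
  "gedge \<phi> ed = {(p, \<phi> p q) | p q. ed = {p,q}}"

lemma gedge_aedge: "gedge \<phi> {u,v} = aedge \<phi> u v"
  unfolding gedge_def aedge_def by (auto simp: doubleton_eq_iff)

context ctx begin

lemma matching: assumes c: "proper_edge_colouring C 3 c" and u: "u \<in> VG" and i: "i < 3"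
  shows "\<exists>v\<in>nbrs EG u. c (aedge \<phi> u v) = i"
proof (rule ccontr)
  assume na: "\<not> ?thesis"
  define S where "S = {u} \<times> (VA - {a})"
  define M where "M = {ed\<in>C. c ed = i \<and> ed \<subseteq> S}"
  have US: "\<Union>M = S"
  proof
    show "\<Union>M \<subseteq> S" by (auto simp: M_def)
    show "S \<subseteq> \<Union>M"
    proof
      fix s assume "s \<in> S"
      then obtain x where s: "s = (u,x)" "x\<in>VA" "x\<noteq>a" by (auto simp: S_def)
      have "\<exists>ed\<in>{ed\<in>C. (u,x)\<in>ed}. c ed = i"
        by (rule col_surj[OF c _ _ _ deg3[OF u s(2,3)] i]) (auto simp: finite_C)
      then obtain ed where ed: "ed\<in>C" "(u,x)\<in>ed" "c ed = i" by blast
      have "ed \<subseteq> S"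
      using ed(1) proof (rule C_cases)
        fix w y z assume h: "w\<in>VG" "{y,z}\<in>EA" "y\<noteq>a" "z\<noteq>a" "ed = {(w,y),(w,z)}"
        then have "w = u" using ed(2) by auto
        then show "ed \<subseteq> S" using h sg_edge2[OF sgA h(2)] by (auto simp: S_def)
      next
        fix p q assume h: "{p,q}\<in>EG" "ed = aedge \<phi> p q"
        have "p = u \<or> q = u" using ed(2) h(2) by (auto simp: aedge_def)
        then show "ed \<subseteq> S"
        proof
          assume "p = u" then have "q \<in> nbrs EG u" using h by (simp add: nbrs_def)
          then show ?thesis using na ed h \<open>p=u\<close> by auto
        next
          assume "q = u" then have "p \<in> nbrs EG u" using h by (simp add: nbrs_def insert_commute)
          then show ?thesis using na ed h \<open>q=u\<close> aedge_sym by metis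
        qed
      qed
      then show "s \<in> \<Union>M" using ed s by (auto simp: M_def)
    qed
  qed
  have pd: "pairwise disjnt M"
    unfolding pairwise_def disjnt_def M_def using c unfolding proper_edge_colouring_def by blast
  have c2: "card ed = 2" if "ed \<in> M" for ed using that C_props by (auto simp: M_def)
  have "card (\<Union>M) = sum card M"
    by (rule card_Union_disjoint[OF pd]) (metis c2 card.infinite zero_neq_numeral)
  also have "\<dots> = 2 * card M" using c2 by simp
  finally have ev: "even (card S)" using US by simp
  have "finite VA" using sgA by (simp add: simple_graph_def)
  then have "card S = card VA - 1" using aV by (simp add: S_def card_cartesian_product_singleton)
  moreover have "even (card VA)" using cubic_even[OF A] .
  moreover have "card VA \<ge> 1" using aV \<open>finite VA\<close> by (metis One_nat_def Suc_leI card_gt_0_iff empty_iff)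
  ultimately show False using ev by simp
qed

lemma K: assumes c: "proper_edge_colouring C 3 c" and u: "u \<in> VG"
  shows "inj_on (\<lambda>v. c (aedge \<phi> u v)) (nbrs EG u)"
proof -
  let ?g = "\<lambda>v. c (aedge \<phi> u v)"
  have "?g ` nbrs EG u \<subseteq> {..<3}" using c aedge_in nbrsG unfolding proper_edge_colouring_def by auto
  moreover have "{..<3} \<subseteq> ?g ` nbrs EG u" using matching[OF c u] by force
  ultimately have "?g ` nbrs EG u = {..<3}" by blast
  then have "card (?g ` nbrs EG u) = card (nbrs EG u)" using nbrsG_card[OF u] by simp
  then show ?thesis using inj_on_iff_eq_card finite_nbrsG[OF u] by blast
qed

lemma K': assumes c: "proper_edge_colouring C 3 c" and u: "u \<in> VG"
  and "v \<in> nbrs EG u" "w \<in> nbrs EG u" "v \<noteq> w" shows "c (aedge \<phi> u v) \<noteq> c (aedge \<phi> u w)"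
  using K[OF c u] assms(3-5) by (meson inj_onD)

lemma fwdG: assumes c: "proper_edge_colouring C 3 c" and ne: "VG \<noteq> {}"
  shows "class1 EG"
proof -
  define cG where "cG ed = c (gedge \<phi> ed)" for ed
  have pc: "proper_edge_colouring EG 3 cG"
    unfolding proper_edge_colouring_def
  proof (intro conjI ballI impI)
    fix e assume "e \<in> EG"
    then obtain p q where "e = {p,q}" using sg_edge[OF sgG] by blast
    then show "cG e < 3" using c aedge_in \<open>e\<in>EG\<close> unfolding proper_edge_colouring_def cG_def
      by (auto simp: gedge_aedge)
  next
    fix e f assume h: "e \<in> EG" "f \<in> EG" "e \<noteq> f \<and> e \<inter> f \<noteq> {}"
    then obtain x y z where xyz: "e = {x,y}" "f = {x,z}" "y \<noteq> z"
      using sg_shared[OF sgG h(1,2)] by blast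
    have "y \<in> nbrs EG x" "z \<in> nbrs EG x" using h xyz by (auto simp: nbrs_def)
    then show "cG e \<noteq> cG f" using K'[OF c _ _ _ xyz(3)] nbrsG xyz
      by (auto simp: cG_def gedge_aedge)
  qed
  obtain u where u: "u \<in> VG" using ne by blast
  show ?thesis
    by (rule class1_intro[OF pc, of "{e\<in>EG. u\<in>e}" u])
      (use G u sg_finite[OF sgG] in \<open>auto simp: cubic_def degree_def\<close>)
qed

lemma fwdA: assumes c: "proper_edge_colouring C 3 c" and u0: "u0 \<in> VG"
  shows "class1 EA"
proof -
  define cA where "cA ed = (if a \<in> ed then c (aedge \<phi> u0 (\<psi> u0 (the_elem (ed - {a}))))
      else c ((\<lambda>y. (u0,y)) ` ed))" for ed
  have mixed: "cA {a,x} \<noteq> cA {x,z}" if h: "{a,x} \<in> EA" "{x,z} \<in> EA" "z \<noteq> a" "x \<noteq> a" for x z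
  proof -
    have xn: "x \<in> nbrs EA a" using h by (simp add: nbrs_def)
    then have p: "\<psi> u0 x \<in> nbrs EG u0" "\<phi> u0 (\<psi> u0 x) = x" using \<psi> u0 by auto
    have "{a,x} - {a} = {x}" using h by auto
    then have e1: "cA {a,x} = c (aedge \<phi> u0 (\<psi> u0 x))" by (simp add: cA_def)
    have e2: "cA {x,z} = c {(u0,x),(u0,z)}" using h by (simp add: cA_def)
    have i1: "aedge \<phi> u0 (\<psi> u0 x) \<in> C" using p nbrsG aedge_in by blast
    have i2: "{(u0,x),(u0,z)} \<in> C" using inner_in[OF u0 h(2) h(4) h(3)] .
    have "u0 \<noteq> \<psi> u0 x" using nbrsG[OF p(1)] by (elim conjE)
    then have "\<psi> u0 x \<noteq> u0" by (rule not_sym)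
    then have ne: "aedge \<phi> u0 (\<psi> u0 x) \<noteq> {(u0,x),(u0,z)}" by (auto simp: aedge_def)
    have "(u0,x) \<in> aedge \<phi> u0 (\<psi> u0 x)" using p by (simp add: aedge_def)
    then have "c (aedge \<phi> u0 (\<psi> u0 x)) \<noteq> c {(u0,x),(u0,z)}"
      by (rule proper_diff[OF c i1 i2 ne]) simp
    then show ?thesis using e1 e2 by simp
  qed
  have pc: "proper_edge_colouring EA 3 cA"
    unfolding proper_edge_colouring_def
  proof (intro conjI ballI impI)
    fix e assume "e \<in> EA"
    then obtain p q where pq: "e = {p,q}" "p \<noteq> q" using sg_edge[OF sgA] by blast
    show "cA e < 3"
    proof (cases "a \<in> e")
      case True
      then obtain x where "e = {a,x}" "x \<noteq> a" using pq by auto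
      then have "e - {a} = {x}" "x \<in> nbrs EA a" using \<open>e \<in> EA\<close> by (auto simp: nbrs_def)
      then show ?thesis using True c aedge_in \<psi>[OF u0] nbrsG unfolding proper_edge_colouring_def cA_def
        by auto
    next
      case False
      then show ?thesis using c inner_in[OF u0, of p q] pq \<open>e\<in>EA\<close> unfolding proper_edge_colouring_def cA_def
        by auto
    qed
  next
    fix e f assume h: "e \<in> EA" "f \<in> EA" "e \<noteq> f \<and> e \<inter> f \<noteq> {}"
    then obtain x y z where xyz: "e = {x,y}" "f = {x,z}" "y \<noteq> z" "x \<noteq> y" "x \<noteq> z"
      using sg_shared[OF sgA h(1,2)] by blast
    show "cA e \<noteq> cA f"
    proof (cases "x = a")
      case True
      then have yz: "y \<in> nbrs EA a" "z \<in> nbrs EA a" using h xyz by (auto simp: nbrs_def)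
      have "e - {a} = {y}" "f - {a} = {z}" using True xyz by auto
      then have ce: "cA e = c (aedge \<phi> u0 (\<psi> u0 y))" "cA f = c (aedge \<phi> u0 (\<psi> u0 z))"
        using True xyz by (auto simp: cA_def)
      have "\<psi> u0 y \<noteq> \<psi> u0 z" using \<psi>[OF u0] yz xyz(3) by metis
      then show ?thesis using K'[OF c u0] \<psi>[OF u0] yz ce by metis
    next
      case False
      show ?thesis
      proof (cases "y = a")
        case True
        have ea: "e = {a,x}" using xyz True by (simp add: insert_commute)
        have "cA {a,x} \<noteq> cA {x,z}" using mixed[of x z] h xyz False True ea by simp
        then show ?thesis using ea xyz by simp
      next
        case ya: False
        show ?thesis
        proof (cases "z = a")
          case True
          have fa: "f = {a,x}" using xyz True by (simp add: insert_commute)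
          have "cA {a,x} \<noteq> cA {x,y}" using mixed[of x y] h xyz False True fa by simp
          then show ?thesis using fa xyz by simp
        next
          case za: False
          have ce: "cA e = c {(u0,x),(u0,y)}" "cA f = c {(u0,x),(u0,z)}"
            using xyz False ya za by (auto simp: cA_def)
          have "{(u0,x),(u0,y)} \<noteq> {(u0,x),(u0,z)}" using xyz by (auto simp: doubleton_eq_iff)
          moreover have "{(u0,x),(u0,y)} \<in> C" "{(u0,x),(u0,z)} \<in> C"
            using inner_in[OF u0] h xyz False ya za by auto
          ultimately have "c {(u0,x),(u0,y)} \<noteq> c {(u0,x),(u0,z)}"
            by (intro proper_diff[OF c, of _ _ "(u0,x)"]) auto
          then show ?thesis using ce by simp
        qed
      qed
    qed
  qed
  show ?thesis
    by (rule class1_intro[OF pc, of "{e\<in>EA. a\<in>e}" a])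
      (use A aV sg_finite[OF sgA] in \<open>auto simp: cubic_def degree_def\<close>)
qed

end

context ctx begin

lemma bwd: assumes cG: "proper_edge_colouring EG 3 cG" and cA: "proper_edge_colouring EA 3 cA"
  and ne: "VG \<noteq> {}"
  shows "class1 C"
proof -
  define h where "h x = cA {a,x}" for x
  define hinv where "hinv = inv_into (nbrs EA a) h"
  define \<pi> where "\<pi> u k = cG {u, \<psi> u (hinv k)}" for u k
  have h_inj: "inj_on h (nbrs EA a)"
  proof (rule inj_onI)
    fix x y assume xy: "x \<in> nbrs EA a" "y \<in> nbrs EA a" "h x = h y"
    show "x = y"
    proof (rule ccontr)
      assume "x \<noteq> y"
      then have "{a,x} \<noteq> {a,y}" by (auto simp: doubleton_eq_iff)
      then have "cA {a,x} \<noteq> cA {a,y}" using proper_diff[OF cA, of "{a,x}" "{a,y}" a] xy nbrsA_sub by auto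
      then show False using xy h_def by simp
    qed
  qed
  have h_img: "h ` nbrs EA a = {..<3}"
  proof -
    have "h ` nbrs EA a \<subseteq> {..<3}" using cA nbrsA_sub unfolding proper_edge_colouring_def h_def by auto
    moreover have "card (h ` nbrs EA a) = card {..<3::nat}" using card_image[OF h_inj] nbrsA_card by simp
    ultimately show ?thesis using card_subset_eq by (metis finite_lessThan)
  qed
  have \<pi>h: "\<pi> u (h x) = cG {u, \<psi> u x}" if "x \<in> nbrs EA a" for u x
    using that h_inj by (simp add: \<pi>_def hinv_def)
  have \<pi>\<phi>: "\<pi> u (cA {a, \<phi> u v}) = cG {u,v}" if "v \<in> nbrs EG u" for u v
    using \<pi>h[of "\<phi> u v" u] \<phi>_in[OF that] \<psi>\<phi>[OF that] by (simp add: h_def)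
  have \<pi>_lt: "\<pi> u k < 3" if uk: "u \<in> VG" "k < 3" for u k
  proof -
    obtain x where x: "x \<in> nbrs EA a" "k = h x" using h_img uk(2) by (metis imageE lessThan_iff)
    then have "\<psi> u x \<in> nbrs EG u" using \<psi> uk(1) by blast
    then have "{u, \<psi> u x} \<in> EG" by (simp add: nbrs_def)
    then show ?thesis using cG x \<pi>h unfolding proper_edge_colouring_def by auto
  qed
  have \<pi>_inj: "\<pi> u k \<noteq> \<pi> u l" if uk: "u \<in> VG" "k < 3" "l < 3" "k \<noteq> l" for u k l
  proof -
    obtain x where x: "x \<in> nbrs EA a" "k = h x" using h_img uk(2) by (metis imageE lessThan_iff)
    obtain y where y: "y \<in> nbrs EA a" "l = h y" using h_img uk(3) by (metis imageE lessThan_iff)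
    have xy: "x \<noteq> y" using x y uk by auto
    have px: "\<psi> u x \<in> nbrs EG u" "\<phi> u (\<psi> u x) = x" using \<psi> uk(1) x by auto
    have py: "\<psi> u y \<in> nbrs EG u" "\<phi> u (\<psi> u y) = y" using \<psi> uk(1) y by auto
    have "\<psi> u x \<noteq> \<psi> u y" using px py xy by metis
    then have "{u, \<psi> u x} \<noteq> {u, \<psi> u y}" by (auto simp: doubleton_eq_iff)
    then have "cG {u, \<psi> u x} \<noteq> cG {u, \<psi> u y}"
      using proper_diff[OF cG, of "{u, \<psi> u x}" "{u, \<psi> u y}" u] px py by (auto simp: nbrs_def)
    then show ?thesis using x y \<pi>h by simp
  qed
  define c where "c ed = (if \<exists>w. fst ` ed = {w} then \<pi> (the_elem (fst ` ed)) (cA (snd ` ed))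
      else cG (fst ` ed))" for ed
  have c_inner: "c {(w,x),(w,y)} = \<pi> w (cA {x,y})" for w x y
    by (simp add: c_def)
  have c_aedge: "c (aedge \<phi> u v) = cG {u,v}" if "u \<noteq> v" for u v
  proof -
    have "fst ` aedge \<phi> u v = {u,v}" by (auto simp: aedge_def)
    moreover have "\<not> (\<exists>w. {u,v} = {w})" using that by (auto simp: doubleton_eq_iff)
    ultimately show ?thesis by (simp add: c_def)
  qed
  have c_aedge': "c (aedge \<phi> u v) = cG {u,v}" if "{u,v} \<in> EG" for u v
    using c_aedge sg_edge2[OF sgG that] by blast
  have mixed0: "c {(w,x),(w,y)} \<noteq> c (aedge \<phi> u v)"
    if "w \<in> VG" "{x,y} \<in> EA" "x \<noteq> a" "y \<noteq> a" "{u,v} \<in> EG" "w = u" "x = \<phi> u v" for w x y u v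
  proof -
    have vn: "v \<in> nbrs EG u" using that by (simp add: nbrs_def)
    have ax: "{a,x} \<in> EA" using \<phi>_in[OF vn] nbrsA_sub that by auto
    have "a \<notin> {x,y}" using that by auto
    then have "{x,y} \<noteq> {a,x}" by auto
    then have d: "cA {x,y} \<noteq> cA {a,x}" using proper_diff[OF cA that(2) ax, of x] by simp
    have "cA {x,y} < 3" "cA {a,x} < 3" using cA that(2) ax unfolding proper_edge_colouring_def by auto
    then have "\<pi> u (cA {x,y}) \<noteq> \<pi> u (cA {a,x})" using \<pi>_inj d that by auto
    then show ?thesis using c_inner c_aedge' \<pi>\<phi>[OF vn] that by simp
  qed
  have mixed: "c {(w,x),(w,y)} \<noteq> c (aedge \<phi> u v)"
    if hm: "w \<in> VG" "{x,y} \<in> EA" "x \<noteq> a" "y \<noteq> a" "{u,v} \<in> EG"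
      "{(w,x),(w,y)} \<inter> aedge \<phi> u v \<noteq> {}" for w x y u v
  proof -
    have yx: "{y,x} \<in> EA" "{v,u} \<in> EG" using that by (auto simp: insert_commute)
    obtain p where p: "p \<in> {(w,x),(w,y)}" "p \<in> aedge \<phi> u v" using hm(6) by blast
    have p1: "p = (w,x) \<or> p = (w,y)" using p(1) by simp
    have p2: "p = (u, \<phi> u v) \<or> p = (v, \<phi> v u)" using p(2) unfolding aedge_def by simp
    have sw: "{(w,y),(w,x)} = {(w,x),(w,y)}" by (rule insert_commute)
    have su: "aedge \<phi> v u = aedge \<phi> u v" by (rule aedge_sym)
    show ?thesis
    proof (cases "p = (w,x)")
      case True
      then show ?thesis
      proof (cases "p = (u, \<phi> u v)")
        case True
        then show ?thesis using mixed0[OF hm(1-5)] \<open>p = (w,x)\<close> by simp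
      next
        case False
        then have "p = (v, \<phi> v u)" using p2 by simp
        then show ?thesis using mixed0[OF hm(1-4) yx(2)] \<open>p = (w,x)\<close> su by simp
      qed
    next
      case False
      then have pw: "p = (w,y)" using p1 by simp
      show ?thesis
      proof (cases "p = (u, \<phi> u v)")
        case True
        then show ?thesis using mixed0[OF hm(1) yx(1) hm(4,3) hm(5)] pw sw by simp
      next
        case False
        then have "p = (v, \<phi> v u)" using p2 by simp
        then show ?thesis using mixed0[OF hm(1) yx(1) hm(4,3) yx(2)] pw su sw by simp
      qed
    qed
  qed
  have aa: "aedge \<phi> u v = aedge \<phi> u' v'"
    if "{u,v} \<in> EG" "{u',v'} \<in> EG" "u = u'" "\<phi> u v = \<phi> u' v'" for u v u' v'
  proof -
    have "v \<in> nbrs EG u" "v' \<in> nbrs EG u" using that by (auto simp: nbrs_def)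
    then have "v = v'" using \<phi>_inj that by auto
    then show ?thesis using that by simp
  qed
  have both_aedge: "aedge \<phi> u v = aedge \<phi> u' v'"
    if hm: "{u,v} \<in> EG" "{u',v'} \<in> EG" "aedge \<phi> u v \<inter> aedge \<phi> u' v' \<noteq> {}" for u v u' v'
  proof -
    have s: "{v,u} \<in> EG" "{v',u'} \<in> EG" using hm by (auto simp: insert_commute)
    have su: "aedge \<phi> v u = aedge \<phi> u v" "aedge \<phi> v' u' = aedge \<phi> u' v'" by (rule aedge_sym)+
    obtain p where p: "p \<in> aedge \<phi> u v" "p \<in> aedge \<phi> u' v'" using hm(3) by blast
    have p1: "p = (u, \<phi> u v) \<or> p = (v, \<phi> v u)" using p(1) unfolding aedge_def by simp
    have p2: "p = (u', \<phi> u' v') \<or> p = (v', \<phi> v' u')" using p(2) unfolding aedge_def by simp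
    show ?thesis
    proof (cases "p = (u, \<phi> u v)")
      case True
      show ?thesis
      proof (cases "p = (u', \<phi> u' v')")
        case True
        then show ?thesis using aa[OF hm(1,2)] \<open>p = (u, \<phi> u v)\<close> by auto
      next
        case False
        then have "p = (v', \<phi> v' u')" using p2 by simp
        then show ?thesis using aa[OF hm(1) s(2)] \<open>p = (u, \<phi> u v)\<close> su by auto
      qed
    next
      case False
      then have pv: "p = (v, \<phi> v u)" using p1 by simp
      show ?thesis
      proof (cases "p = (u', \<phi> u' v')")
        case True
        then show ?thesis using aa[OF s(1) hm(2)] pv su by auto
      next
        case False
        then have "p = (v', \<phi> v' u')" using p2 by simp
        then show ?thesis using aa[OF s(1) s(2)] pv su by auto
      qed
    qed
  qed
  have pc: "proper_edge_colouring C 3 c"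
    unfolding proper_edge_colouring_def
  proof (intro conjI ballI impI)
    fix ed assume "ed \<in> C"
    then show "c ed < 3"
    proof (rule C_cases)
      fix w x y assume hh: "w \<in> VG" "{x,y} \<in> EA" "x \<noteq> a" "y \<noteq> a" "ed = {(w,x),(w,y)}"
      have "cA {x,y} < 3" using cA hh(2) unfolding proper_edge_colouring_def by auto
      then show ?thesis using hh c_inner \<pi>_lt by simp
    next
      fix u v assume hh: "{u,v} \<in> EG" "ed = aedge \<phi> u v"
      then show ?thesis using c_aedge' cG unfolding proper_edge_colouring_def by auto
    qed
  next
    fix e1 e2 assume hh: "e1 \<in> C" "e2 \<in> C" "e1 \<noteq> e2 \<and> e1 \<inter> e2 \<noteq> {}"
    show "c e1 \<noteq> c e2"
    using hh(1) proof (rule C_cases)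
      fix w x y assume i1: "w \<in> VG" "{x,y} \<in> EA" "x \<noteq> a" "y \<noteq> a" "e1 = {(w,x),(w,y)}"
      show ?thesis
      using hh(2) proof (rule C_cases)
        fix w' x' y' assume i2: "w' \<in> VG" "{x',y'} \<in> EA" "x' \<noteq> a" "y' \<noteq> a" "e2 = {(w',x'),(w',y')}"
        have ww: "w = w'" using hh(3) i1(5) i2(5) by auto
        have ne1: "{x,y} \<noteq> {x',y'}" using hh(3) i1(5) i2(5) ww by auto
        have "{x,y} \<inter> {x',y'} \<noteq> {}" using hh(3) i1(5) i2(5) by auto
        then obtain p where "p \<in> {x,y}" "p \<in> {x',y'}" by blast
        then have d: "cA {x,y} \<noteq> cA {x',y'}" using proper_diff[OF cA i1(2) i2(2) ne1] by blast
        have "cA {x,y} < 3" "cA {x',y'} < 3" using cA i1(2) i2(2) unfolding proper_edge_colouring_def by auto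
        then show ?thesis using \<pi>_inj[OF i1(1) _ _ d] c_inner i1(5) i2(5) ww by simp
      next
        fix u v assume a2: "{u,v} \<in> EG" "e2 = aedge \<phi> u v"
        show ?thesis using mixed[OF i1(1-4) a2(1)] hh(3) i1(5) a2(2) by simp
      qed
    next
      fix u v assume a1: "{u,v} \<in> EG" "e1 = aedge \<phi> u v"
      show ?thesis
      using hh(2) proof (rule C_cases)
        fix w' x' y' assume i2: "w' \<in> VG" "{x',y'} \<in> EA" "x' \<noteq> a" "y' \<noteq> a" "e2 = {(w',x'),(w',y')}"
        show ?thesis using mixed[OF i2(1-4) a1(1)] hh(3) i2(5) a1(2) by (metis inf_commute)
      next
        fix u' v' assume a2: "{u',v'} \<in> EG" "e2 = aedge \<phi> u' v'"
        show ?thesis using both_aedge[OF a1(1) a2(1)] hh(3) a1(2) a2(2) by simp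
      qed
    qed
  qed
  obtain u where u: "u \<in> VG" using ne by blast
  obtain x where x: "x \<in> nbrs EA a" using nbrsA_card by (metis card.empty ex_in_conv zero_neq_numeral)
  have xv: "x \<in> VA" "x \<noteq> a" using nbrsA_sub[OF x] by auto
  show ?thesis
    by (rule class1_intro[OF pc, of "{ed\<in>C. (u,x)\<in>ed}" "(u,x)"])
      (use deg3[OF u xv] finite_C in auto)
qed

end

lemma not_class1_empty: "\<not> class1 ({}::'v set set)"
proof -
  have "chromatic_index ({}::'v set set) = 0" unfolding chromatic_index_def
    by (rule Least_eq_0) (rule exI[of _ "\<lambda>_. 0"], simp add: proper_edge_colouring_def)
  then show ?thesis by (simp add: class1_def)
qed

theorem proposition5p21:
  fixes VG :: "'a set" and EG :: "'a set set"
    and VA :: "'b set" and EA :: "'b set set"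
    and a :: 'b and \<phi> :: "'a \<Rightarrow> 'a \<Rightarrow> 'b"
  assumes "cubic VG EG" and "cubic VA EA" and "a \<in> VA"
    and "valid_attachment VG EG EA a \<phi>"
  shows "class1 (comp_edges VG EG EA a \<phi>) \<longleftrightarrow> class1 EG \<and> class1 EA"
proof -
  interpret ctx VG EG VA EA a \<phi> using assms by unfold_locales
  have empty: "EG = {} \<and> comp_edges VG EG EA a \<phi> = {}" if "VG = {}"
  proof -
    have "EG = {}" using sg_sub[OF sgG] that by (metis all_not_in_conv card.empty subset_empty zero_neq_numeral)
    then show ?thesis using that by (simp add: comp_edges_def)
  qed
  show ?thesis
  proof
    assume h: "class1 (comp_edges VG EG EA a \<phi>)"
    obtain c where c: "proper_edge_colouring (comp_edges VG EG EA a \<phi>) 3 c"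
      using class1_col[OF finite_C h] by blast
    have "VG \<noteq> {}" using h empty not_class1_empty by force
    then obtain u where "u \<in> VG" by blast
    show "class1 EG \<and> class1 EA" using fwdG[OF c \<open>VG \<noteq> {}\<close>] fwdA[OF c \<open>u \<in> VG\<close>] by simp
  next
    assume h: "class1 EG \<and> class1 EA"
    obtain cG where cG: "proper_edge_colouring EG 3 cG" using class1_col[OF sg_finite[OF sgG]] h by blast
    obtain cA where cA: "proper_edge_colouring EA 3 cA" using class1_col[OF sg_finite[OF sgA]] h by blast
    have "VG \<noteq> {}" using h empty not_class1_empty by force
    then show "class1 (comp_edges VG EG EA a \<phi>)" using bwd[OF cG cA] by simp
  qed
qed

end
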